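(* For integers $k\ge3$ and $n>k(k-1)$, $$\left(\frac nk\right)^k\left(1-e_k(n)\right)\le p(n,k)\le\left(\frac nk\right)^k,\qquad\text{where } e_k(n)=\frac{4}{27}\cdot\frac{k^3}{n^2}.$$
   Context: For integers $q>t>0$, $p(q,t)$ is the maximum of $\prod_{i=1}^t q_i$ over all partitions $q_1+\dots+q_t=q$ into nonnegative integers with each $q_i<q$ (this maximum is attained by an equitable partition, i.e. one with $|q_i-q_j|\le1$). *)

theory Defs
  imports Complex_Main
begin

text \<open>Tuples are represented as functions on the index set {..<t}, extended by 0 outside.\<close>

definition partitions_lt :: "nat \<Rightarrow> nat \<Rightarrow> (nat \<Rightarrow> nat) set" where
  "partitions_lt q t = {f. (\<forall>i. i \<ge> t \<longrightarrow> f i = 0) \<and> (\<Sum>i<t. f i) = q \<and> (\<forall>i<t. f i < q)}"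

definition p :: "nat \<Rightarrow> nat \<Rightarrow> nat" where
  "p q t = Max ((\<lambda>f. \<Prod>i<t. f i) ` partitions_lt q t)"

end

theory Submission
  imports Defs "HOL-Analysis.Analysis"
begin

lemma lnA: fixes b :: real assumes "0 \<le> b" shows "b - b^2/2 \<le> ln (1+b)"
proof -
  let ?f = "\<lambda>t::real. ln (1+t) - t + t^2/2"
  have "?f 0 \<le> ?f b"
  proof (rule DERIV_nonneg_imp_nondecreasing[OF assms])
    fix x :: real assume x0: "0 \<le> x" and xb: "x \<le> b"
    show "\<exists>y. DERIV ?f x :> y \<and> 0 \<le> y"
    proof (intro exI conjI)
      show "DERIV ?f x :> (1/(1+x) - 1 + x)"
        using x0 by (auto intro!: derivative_eq_intros)
      have "1/(1+x) - 1 + x = x^2/(1+x)" using x0 by (simp add: field_simps power2_eq_square)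
      then show "0 \<le> 1/(1+x) - 1 + x" using x0 by simp
    qed
  qed
  then show ?thesis by simp
qed

lemma lnB: fixes a :: real assumes "0 \<le> a" "a < 1" shows "- ((2*a - a^2)/(2*(1-a))) \<le> ln (1-a)"
proof -
  let ?f = "\<lambda>t::real. ln (1-t) + inverse (1-t) / 2 - (1-t)/2"
  have "?f 0 \<le> ?f a"
  proof (rule DERIV_nonneg_imp_nondecreasing[OF assms(1)])
    fix x :: real assume x0: "0 \<le> x" and xa: "x \<le> a"
    then have x1: "x < 1" using assms by simp
    show "\<exists>y. DERIV ?f x :> y \<and> 0 \<le> y"
    proof (intro exI conjI)
      have ne: "(1-x) \<noteq> 0" using x1 by simp
      show "DERIV ?f x :> (-1/(1-x) + inverse ((1-x)^2) / 2 + 1/2)"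
        using x1 apply (auto intro!: derivative_eq_intros simp: power2_eq_square)
        done
      have "-1/(1-x) + inverse ((1-x)^2) / 2 + 1/2 = x^2/(2*(1-x)^2)"
      proof -
        define y where "y = 1 - x"
        have y: "y \<noteq> 0" "x = 1 - y" using ne y_def by auto
        have "-1/y + inverse (y^2) / 2 + 1/2 = (1-y)^2/(2*y^2)"
          using y(1) by (simp add: field_simps power2_eq_square)
        then show ?thesis using y by simp
      qed
      then show "0 \<le> -1/(1-x) + inverse ((1-x)^2) / 2 + 1/2" by simp
    qed
  qed
  moreover have "?f a = ln (1-a) + (2*a - a^2)/(2*(1-a))" using assms
    by (simp add: field_simps power2_eq_square)
  ultimately show ?thesis by simp
qed

lemma polyseg: fixes s lo hi c :: real
  assumes "1/2 \<le> lo" "lo \<le> s" "s \<le> hi" "hi \<le> 1" "lo*(1-lo)*(2+hi^2) \<le> c"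
  shows "s*(1-s)*(2+s^2) \<le> c"
proof -
  have a: "s*(1-s) \<le> lo*(1-lo)"
  proof -
    have "lo*(1-lo) - s*(1-s) = (s-lo)*(s+lo-1)" by (simp add: algebra_simps)
    also have "\<dots> \<ge> 0" using assms by (intro mult_nonneg_nonneg) auto
    finally show ?thesis by simp
  qed
  have b: "2+s^2 \<le> 2+hi^2" using assms by (simp add: power_mono)
  have "s*(1-s)*(2+s^2) \<le> lo*(1-lo)*(2+hi^2)"
    by (rule mult_mono[OF a b]) (use assms in \<open>auto intro: mult_nonneg_nonneg\<close>)
  then show ?thesis using assms by linarith
qed

lemma poly: fixes s :: real assumes "0 \<le> s" "s \<le> 1" shows "s*(1-s)*(2+s^2) \<le> 16/27"
proof -
  consider "s \<le> 3/5" | "3/5 \<le> s" "s \<le> 13/20" | "13/20 \<le> s" "s \<le> 7/10"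
    | "7/10 \<le> s" "s \<le> 4/5" | "4/5 \<le> s" by linarith
  then show ?thesis
  proof cases
    case 1
    have a: "s*(1-s) \<le> 1/4"
    proof -
      have "1/4 - s*(1-s) = (s - 1/2)^2" by (simp add: algebra_simps power2_eq_square)
      then show ?thesis by (metis diff_ge_0_iff_ge zero_le_power2)
    qed
    have b: "2+s^2 \<le> 2+(3/5)^2" using 1 assms by (simp add: power_mono)
    have "s*(1-s)*(2+s^2) \<le> 1/4 * (2+(3/5)^2)"
      by (rule mult_mono[OF a b]) (use assms in auto)
    moreover have "1/4*(2+(3/5)^2) \<le> (16/27::real)" by (simp add: power2_eq_square)
    ultimately show ?thesis by linarith
  next
    case 2 then show ?thesis by (intro polyseg[of "3/5" s "13/20"]) (auto simp: power2_eq_square)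
  next
    case 3 then show ?thesis by (intro polyseg[of "13/20" s "7/10"]) (auto simp: power2_eq_square)
  next
    case 4 then show ?thesis by (intro polyseg[of "7/10" s "4/5"]) (auto simp: power2_eq_square)
  next
    case 5 then show ?thesis using assms by (intro polyseg[of "4/5" s "1"]) (auto simp: power2_eq_square)
  qed
qed
lemma Eident: fixes Q S K X :: real
  assumes "Q \<noteq> 0" "X \<noteq> 0" "X = Q + S"
  shows "- (K*(1-S)) * ((2*(S/X) - (S/X)^2)/(2*(1-S/X))) + (K*S) * ((1-S)/X - ((1-S)/X)^2/2)
     = - K*S*(1-S)*(Q + S^2)/(2*X^2*Q)"
proof -
  have 1: "1 - S/X = Q/X" using assms by (simp add: field_simps)
  have "- (K*(1-S)) * ((2*(S/X) - (S/X)^2)/(2*(Q/X))) + (K*S) * ((1-S)/X - ((1-S)/X)^2/2)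
     = - K*S*(1-S)*(Q + S^2)/(2*X^2*Q)"
    using assms(1,2) apply (simp add: field_simps power2_eq_square)
    using assms(3) by algebra
  then show ?thesis using 1 by simp
qed


lemma key: fixes Q S K X :: real and r m :: nat
  assumes Q2: "Q \<ge> 2" and S0: "0 \<le> S" and S1: "S < 1" and K0: "K > 0" and XQ: "X = Q + S"
    and rK: "real r = K*S" and mK: "real m = K*(1-S)"
  shows "X^(m+r) * (1 - 4*K/(27*X^2)) \<le> (Q+1)^r * Q^m"
proof -
  have X0: "X > 0" using assms by simp
  define a where "a = S/X"
  define b where "b = (1-S)/X"
  have a0: "0 \<le> a" and a1: "a < 1" using X0 S0 XQ Q2 unfolding a_def by (auto simp: field_simps)
  have b0: "0 \<le> b" using X0 S1 unfolding b_def by simp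
  have Qa: "Q = X*(1-a)" using X0 XQ unfolding a_def by (simp add: field_simps)
  have Qb: "Q + 1 = X*(1+b)" using X0 XQ unfolding b_def by (simp add: field_simps)
  define A where "A = (2*a - a^2)/(2*(1-a))"
  define B where "B = b - b^2/2"
  have eA: "exp (-A) \<le> 1 - a"
  proof -
    have "-A \<le> ln (1-a)" using lnB[OF a0 a1] unfolding A_def by simp
    then have "exp (-A) \<le> exp (ln (1-a))" by simp
    then show ?thesis using a1 by simp
  qed
  have eB: "exp B \<le> 1 + b"
  proof -
    have "B \<le> ln (1+b)" using lnA[OF b0] unfolding B_def by simp
    then have "exp B \<le> exp (ln (1+b))" by simp
    then show ?thesis using b0 by simp
  qed
  have pm: "exp (real m * (-A)) \<le> (1-a)^m"
    unfolding exp_of_nat_mult by (rule power_mono[OF eA]) simp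
  have pr: "exp (real r * B) \<le> (1+b)^r"
    unfolding exp_of_nat_mult by (rule power_mono[OF eB]) simp
  define E where "E = real m * (-A) + real r * B"
  have "E = - K*S*(1-S)*(Q + S^2)/(2*X^2*Q)"
    unfolding E_def A_def B_def a_def b_def rK mK
    using Eident[of Q X S K] Q2 X0 XQ by simp
  also have "\<dots> = - (K/X^2) * (S*(1-S)*(Q+S^2)/(2*Q))" using X0 Q2 by (simp add: divide_simps)
  finally have E1: "E = - (K/X^2) * (S*(1-S)*(Q+S^2)/(2*Q))" .
  have br: "S*(1-S)*(Q+S^2)/(2*Q) \<le> 4/27"
  proof -
    have "S*(1-S)*(Q+S^2)/(2*Q) = S*(1-S)*(1+S^2/Q)/2" using Q2 by (simp add: field_simps)
    also have "\<dots> \<le> S*(1-S)*(1+S^2/2)/2"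
    proof -
      have "S^2/Q \<le> S^2/2" using Q2 by (intro divide_left_mono) auto
      moreover have "S*(1-S) \<ge> 0" using S0 S1 by simp
      ultimately show ?thesis by (simp add: mult_left_mono divide_right_mono)
    qed
    also have "\<dots> = S*(1-S)*(2+S^2)/4" by (simp add: field_simps)
    also have "\<dots> \<le> (16/27)/4" using poly[of S] S0 S1 by (intro divide_right_mono) auto
    finally show ?thesis by simp
  qed
  have KX: "K/X^2 \<ge> 0" using K0 by simp
  have "E \<ge> - (K/X^2) * (4/27)" unfolding E1 using mult_left_mono[OF br KX] by simp
  then have "1 - 4*K/(27*X^2) \<le> 1 + E" by (simp add: field_simps)
  also have "\<dots> \<le> exp E" by simp
  also have "\<dots> = exp (real m * (-A)) * exp (real r * B)" unfolding E_def by (simp add: exp_add[symmetric])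
  also have "\<dots> \<le> (1-a)^m * (1+b)^r" by (rule mult_mono[OF pm pr]) (use a1 in auto)
  finally have main: "1 - 4*K/(27*X^2) \<le> (1-a)^m * (1+b)^r" .
  have "X^(m+r) * (1 - 4*K/(27*X^2)) \<le> X^(m+r) * ((1-a)^m * (1+b)^r)"
    using X0 main by (intro mult_left_mono) auto
  also have "\<dots> = (X*(1-a))^m * (X*(1+b))^r" by (simp add: power_add power_mult_distrib)
  also have "\<dots> = (Q+1)^r * Q^m" using Qa Qb by simp
  finally show ?thesis .
qed

lemma amgm_bound:
  fixes f :: "nat \<Rightarrow> nat" and n k :: nat
  assumes "k > 0" "(\<Sum>i<k. f i) = n"
  shows "real (\<Prod>i<k. f i) \<le> (real n / real k) ^ k"
proof -
  let ?P = "(\<Prod>i<k. real (f i))"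
  have P0: "?P \<ge> 0" by (simp add: prod_nonneg)
  have "(\<Sum>i\<in>{..<k}. real (f i) / card {..<k}) \<ge> ?P powr (1 / card {..<k})"
    using assms by (intro arith_geom_mean) auto
  moreover have "(\<Sum>i\<in>{..<k}. real (f i) / card {..<k}) = real n / real k"
    using assms by (simp add: sum_divide_distrib[symmetric] of_nat_sum[symmetric])
  ultimately have le: "?P powr (1/real k) \<le> real n / real k" by simp
  have "?P \<le> (real n / real k) ^ k"
  proof (cases "?P = 0")
    case True
    have "0 \<le> (real n / real k)^k" by simp
    then show ?thesis using True by linarith
  next
    case False
    then have Ppos: "?P > 0" using P0 by linarith
    have "?P = (?P powr (1/real k)) powr real k"
      using Ppos assms by (simp add: powr_powr)
    also have "\<dots> = (?P powr (1/real k)) ^ k" proof (rule powr_realpow)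
      show "0 < ?P powr (1/real k)" unfolding powr_gt_zero using Ppos by linarith
    qed
    also have "\<dots> \<le> (real n / real k) ^ k" by (rule power_mono[OF le]) simp
    finally show ?thesis .
  qed
  then show ?thesis by simp
qed

theorem lemma4p4:
  fixes n k :: nat
  assumes "k \<ge> 3" and "n > k * (k - 1)"
  shows "(real n / real k) ^ k * (1 - 4 / 27 * real k ^ 3 / real n ^ 2) \<le> real (p n k)
       \<and> real (p n k) \<le> (real n / real k) ^ k"
proof -
  have k0: "k > 0" using assms by simp
  define q where "q = n div k"
  define r where "r = n mod k"
  have nqr: "n = q*k + r" unfolding q_def r_def by simp
  have rk: "r < k" unfolding r_def using k0 by simp
  have q2: "q \<ge> 2"
  proof (rule ccontr)
    assume "\<not> q \<ge> 2"
    then have "q \<le> 1" by simp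
    then have "q*k \<le> k" using k0 by simp
    then have "n < 2*k" using nqr rk by linarith
    moreover have "2*k \<le> k*(k-1)" using assms(1) by simp
    ultimately show False using assms(2) by simp
  qed
  define S where "S = {..<k}"
  define Im where "Im = (\<lambda>f. \<Prod>i<k. f i) ` partitions_lt n k"
  have fin: "finite Im"
  proof (rule finite_subset)
    show "Im \<subseteq> {..n^k}"
    proof
      fix y assume "y \<in> Im"
      then obtain f where f: "f \<in> partitions_lt n k" and y: "y = (\<Prod>i<k. f i)" unfolding Im_def by auto
      have "(\<Prod>i<k. f i) \<le> (\<Prod>i<k. n)"
        using f unfolding partitions_lt_def by (intro prod_mono) auto
      then show "y \<in> {..n^k}" using y by simp
    qed
  qed simp
  define f0 where "f0 = (\<lambda>i. if i < r then q+1 else if i < k then q else (0::nat))"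
  have sum0: "(\<Sum>i<k. f0 i) = n"
  proof -
    have "(\<Sum>i<k. f0 i) = (\<Sum>i\<in>{0..<r}. f0 i) + (\<Sum>i\<in>{r..<k}. f0 i)"
      using rk by (simp add: lessThan_atLeast0 sum.atLeastLessThan_concat)
    also have "(\<Sum>i\<in>{0..<r}. f0 i) = (\<Sum>i\<in>{0..<r}. q+1)" by (rule sum.cong) (auto simp: f0_def)
    also have "(\<Sum>i\<in>{r..<k}. f0 i) = (\<Sum>i\<in>{r..<k}. q)" by (rule sum.cong) (auto simp: f0_def)
    finally have "(\<Sum>i<k. f0 i) = r*(q+1) + (k-r)*q" by simp
    also have "\<dots> = n" using nqr rk by (simp add: algebra_simps diff_mult_distrib)
    finally show ?thesis .
  qed
  have prod0: "(\<Prod>i<k. f0 i) = (q+1)^r * q^(k-r)"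
  proof -
    have "(\<Prod>i<k. f0 i) = (\<Prod>i\<in>{0..<r}. f0 i) * (\<Prod>i\<in>{r..<k}. f0 i)"
      using rk by (simp add: lessThan_atLeast0 prod.atLeastLessThan_concat)
    also have "(\<Prod>i\<in>{0..<r}. f0 i) = (\<Prod>i\<in>{0..<r}. q+1)" by (rule prod.cong) (auto simp: f0_def)
    also have "(\<Prod>i\<in>{r..<k}. f0 i) = (\<Prod>i\<in>{r..<k}. q)" by (rule prod.cong) (auto simp: f0_def)
    finally show ?thesis by simp
  qed
  have f0in: "f0 \<in> partitions_lt n k"
  proof -
    have "q + 1 < n" using nqr q2 assms(1)
    proof -
      have "3*q \<le> k*q" using assms(1) by simp
      then show ?thesis using nqr q2 mult.commute[of q k] by linarith
    qed
    then show ?thesis unfolding partitions_lt_def using sum0 rk by (auto simp: f0_def)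
  qed
  have pmax: "p n k = Max Im" unfolding p_def Im_def by simp
  have ne: "Im \<noteq> {}" using f0in unfolding Im_def by auto
  have lower: "(q+1)^r * q^(k-r) \<le> p n k"
    unfolding pmax using fin f0in prod0 unfolding Im_def by (metis Max_ge image_eqI)
  have upper: "real (p n k) \<le> (real n / real k) ^ k"
  proof -
    have "p n k \<in> Im" unfolding pmax using fin ne by (rule Max_in)
    then obtain f where f: "f \<in> partitions_lt n k" and y: "p n k = (\<Prod>i<k. f i)" unfolding Im_def by auto
    have "(\<Sum>i<k. f i) = n" using f unfolding partitions_lt_def by simp
    then show ?thesis unfolding y by (rule amgm_bound[OF k0])
  qed
  have K: "real k > 0" using k0 by simp
  have keyapp: "(real q + real r / real k)^((k-r)+r) * (1 - 4*real k/(27*(real q + real r / real k)^2))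
      \<le> (real q+1)^r * real q^(k-r)"
  proof (rule key)
    show "2 \<le> real q" using q2 by simp
    show "0 \<le> real r / real k" by simp
    show "real r / real k < 1" using rk K by simp
    show "0 < real k" by (rule K)
    show "real r = real k * (real r / real k)" using K by simp
    show "real (k - r) = real k * (1 - real r / real k)" using K rk by (simp add: field_simps of_nat_diff)
  qed simp
  have X: "real q + real r / real k = real n / real k" using K nqr by (simp add: field_simps)
  have ee: "4*real k/(27*(real n / real k)^2) = 4 / 27 * real k ^ 3 / real n ^ 2"
    using K by (simp add: field_simps power2_eq_square power3_eq_cube)
  have "(real n / real k) ^ k * (1 - 4 / 27 * real k ^ 3 / real n ^ 2) \<le> (real q+1)^r * real q^(k-r)"
    using keyapp rk unfolding X ee by simp
  also have "\<dots> = real ((q+1)^r * q^(k-r))" by (simp add: add.commute)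
  also have "\<dots> \<le> real (p n k)" using lower by (simp only: of_nat_le_iff)
  finally show ?thesis using upper by simp
qed

end
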